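(* Let $\mathcal{X}$ be an instance space and $\mathcal{Y}$ a finite label set. Let $\hat f:\mathcal{X}\to\mathbb{P}(\mathcal{Y})$ be a fixed probabilistic classifier (e.g. trained on a separate proper training set, independent of the data below), and write $\hat f(x)_y$ for the probability it assigns to label $y$ at $x$. Let $(x_j,y_j)$, $j\in\mathcal{I}_2$, be calibration points, each observed only through a candidate set $S_j\subseteq\mathcal{Y}$ with $y_j\in S_j$, and let $(x_{new},y_{new})$ be a test point. Define the multiset of scores $$\mathcal{E}_{\max}:=\Big\{\,1-\min_{y\in S_j}\hat f(x_j)_y : j\in\mathcal{I}_2\Big\}.$$ If the points $\{(x_j,y_j):j\in\mathcal{I}_2\}\cup\{(x_{new},y_{new})\}$ are exchangeable, then for every $\epsilon\in(0,1]$, $$\mathbb{P}\big(y_{new}\in\mathcal{T}(x_{new},\hat f,\mathcal{E}_{\max},\epsilon)\big)\ge 1-\epsilon .$$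
   Context: For a finite multiset $\mathcal{E}$ of real numbers and $\epsilon\in(0,1]$, the critical score $q(\mathcal{E},\epsilon)$ is the $\lceil(1+|\mathcal{E}|)(1-\epsilon)\rceil$-th smallest element of $\mathcal{E}$ (counted with multiplicity); if this index exceeds $|\mathcal{E}|$, $q(\mathcal{E},\epsilon)$ is taken to be $+\infty$. For $x\in\mathcal{X}$, the prediction set is $\mathcal{T}(x,\hat f,\mathcal{E},\epsilon):=\{y\in\mathcal{Y}:\hat f(x)_y\ge 1-q(\mathcal{E},\epsilon)\}$. *)

theory Defs
  imports "HOL-Probability.Probability" "HOL-Combinatorics.Permutations"
begin

text \<open>If the index is 0 (only possible for eps = 1) we use -infinity (empty prediction set);
  the theorem is trivial in that case.\<close>
definition critical_score :: "real multiset \<Rightarrow> real \<Rightarrow> ereal" where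
  "critical_score E \<epsilon> =
     (let k = nat \<lceil>(1 + real (size E)) * (1 - \<epsilon>)\<rceil> in
      if size E < k then \<infinity>
      else if k = 0 then -\<infinity>
      else ereal (sorted_list_of_multiset E ! (k - 1)))"

definition pred_set :: "'x \<Rightarrow> ('x \<Rightarrow> 'y \<Rightarrow> real) \<Rightarrow> real multiset \<Rightarrow> real \<Rightarrow> 'y set" where
  "pred_set x f E \<epsilon> = {y. 1 - critical_score E \<epsilon> \<le> ereal (f x y)}"

definition prob_classifier :: "'x measure \<Rightarrow> ('x \<Rightarrow> 'y::finite \<Rightarrow> real) \<Rightarrow> bool" where
  "prob_classifier MX f \<longleftrightarrow>
     (\<forall>x y. 0 \<le> f x y) \<and> (\<forall>x. (\<Sum>y\<in>UNIV. f x y) = 1) \<and>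
     (\<forall>y. (\<lambda>x. f x y) \<in> borel_measurable MX)"

definition E_max :: "('x \<Rightarrow> 'y \<Rightarrow> real) \<Rightarrow> (nat \<Rightarrow> 'x) \<Rightarrow> (nat \<Rightarrow> 'y set) \<Rightarrow> nat \<Rightarrow> real multiset" where
  "E_max f xs S n = image_mset (\<lambda>j. 1 - Min ((\<lambda>y. f (xs j) y) ` S j)) (mset [0..<n])"

definition exchangeable :: "'a measure \<Rightarrow> 'x measure \<Rightarrow> 'y measure \<Rightarrow> nat \<Rightarrow>
    (nat \<Rightarrow> 'a \<Rightarrow> 'x) \<Rightarrow> (nat \<Rightarrow> 'a \<Rightarrow> 'y) \<Rightarrow> bool" where
  "exchangeable M MX MY n X Y \<longleftrightarrow>
     (\<forall>\<pi>. \<pi> permutes {0..n} \<longrightarrow>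
        distr M (PiM {0..n} (\<lambda>_. MX \<Otimes>\<^sub>M MY)) (\<lambda>\<omega>. \<lambda>i\<in>{0..n}. (X (\<pi> i) \<omega>, Y (\<pi> i) \<omega>)) =
        distr M (PiM {0..n} (\<lambda>_. MX \<Otimes>\<^sub>M MY)) (\<lambda>\<omega>. \<lambda>i\<in>{0..n}. (X i \<omega>, Y i \<omega>)))"

end

theory Submission
  imports Defs
begin

lemma comb_count:
  fixes R :: "nat \<Rightarrow> real"
  assumes "finite I" "k \<le> card I"
  shows "k \<le> card {i\<in>I. card {j\<in>I. R j < R i} < k}"
proof (cases "{i\<in>I. k \<le> card {j\<in>I. R j < R i}} = {}")
  case True
  then have "{i\<in>I. card {j\<in>I. R j < R i} < k} = I" by auto
  then show ?thesis using assms by simp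
next
  case False
  define B where "B = {i\<in>I. k \<le> card {j\<in>I. R j < R i}}"
  have fB: "finite B" using assms B_def by simp
  have ne: "R ` B \<noteq> {}" using False B_def by auto
  have "Min (R ` B) \<in> R ` B" using fB ne by (intro Min_in) auto
  then obtain i0 where i00: "i0 \<in> B" "R i0 = Min (R ` B)" by auto
  then have i0: "i0 \<in> B" "\<And>i. i \<in> B \<Longrightarrow> R i0 \<le> R i" using fB by auto
  have sub: "{j\<in>I. R j < R i0} \<subseteq> {i\<in>I. card {j\<in>I. R j < R i} < k}"
  proof
    fix j assume "j \<in> {j\<in>I. R j < R i0}"
    then have "j \<notin> B" using i0 by force
    then show "j \<in> {i\<in>I. card {j\<in>I. R j < R i} < k}" using \<open>j \<in> _\<close> B_def by auto
  qed
  have "card {j\<in>I. R j < R i0} \<le> card {i\<in>I. card {j\<in>I. R j < R i} < k}"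
    by (rule card_mono) (use assms sub in auto)
  moreover have "k \<le> card {j\<in>I. R j < R i0}" using i0 B_def by simp
  ultimately show ?thesis by simp
qed

lemma sorted_nth_iff:
  fixes xs :: "real list"
  assumes "sorted xs" "1 \<le> k" "k \<le> length xs"
  shows "r \<le> xs ! (k - 1) \<longleftrightarrow> length (filter (\<lambda>e. e < r) xs) < k"
proof
  assume h: "r \<le> xs ! (k - 1)"
  have "{i. i < length xs \<and> xs ! i < r} \<subseteq> {..<k-1}"
  proof
    fix i assume "i \<in> {i. i < length xs \<and> xs ! i < r}"
    moreover have "k - 1 \<le> i \<Longrightarrow> xs ! (k-1) \<le> xs ! i" using assms calculation
      by (simp add: sorted_nth_mono)
    ultimately show "i \<in> {..<k-1}" using h by force
  qed
  then have "card {i. i < length xs \<and> xs ! i < r} \<le> k - 1"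
    using card_mono[OF finite_lessThan[of "k-1"]] by fastforce
  then show "length (filter (\<lambda>e. e < r) xs) < k" using assms
    by (simp add: length_filter_conv_card)
next
  assume h: "length (filter (\<lambda>e. e < r) xs) < k"
  show "r \<le> xs ! (k - 1)"
  proof (rule ccontr)
    assume "\<not> r \<le> xs ! (k - 1)"
    note nr = this
    have "{..<k} \<subseteq> {i. i < length xs \<and> xs ! i < r}"
    proof
      fix x assume "x \<in> {..<k}"
      then have "xs ! x \<le> xs ! (k-1)" using assms by (intro sorted_nth_mono) auto
      then show "x \<in> {i. i < length xs \<and> xs ! i < r}" using \<open>x \<in> {..<k}\<close> assms \<open>\<not> r \<le> xs ! (k - 1)\<close> by auto
    qed
    then have "k \<le> card {i. i < length xs \<and> xs ! i < r}"
      using card_mono[of "{i. i < length xs \<and> xs ! i < r}" "{..<k}"] by fastforce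
    then show False using h by (simp add: length_filter_conv_card)
  qed
qed

lemma crit_iff:
  fixes g :: "nat \<Rightarrow> real"
  assumes "1 \<le> k" "k \<le> n"
  shows "r \<le> sorted_list_of_multiset (image_mset g (mset [0..<n])) ! (k - 1)
     \<longleftrightarrow> card {j\<in>{..<n}. g j < r} < k"
proof -
  let ?E = "image_mset g (mset [0..<n])"
  let ?xs = "sorted_list_of_multiset ?E"
  have "length ?xs = size (mset ?xs)" by (simp only: size_mset)
  also have "mset ?xs = ?E" by (rule mset_sorted_list_of_multiset)
  finally have "length ?xs = n" by simp
  moreover have "length (filter (\<lambda>e. e < r) ?xs) = card {j\<in>{..<n}. g j < r}"
  proof -
    have "length (filter (\<lambda>e. e < r) ?xs) = size (filter_mset (\<lambda>e. e < r) ?E)"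
      by (metis mset_filter mset_sorted_list_of_multiset size_mset)
    also have "\<dots> = size (filter_mset (\<lambda>j. g j < r) (mset [0..<n]))"
      by (simp add: filter_mset_image_mset)
    also have "\<dots> = length (filter (\<lambda>j. g j < r) [0..<n])"
      by (metis mset_filter size_mset)
    also have "\<dots> = card {j\<in>{..<n}. g j < r}"
    proof -
      have "length (filter (\<lambda>j. g j < r) [0..<n]) = card (set (filter (\<lambda>j. g j < r) [0..<n]))"
        by (rule distinct_card[symmetric]) simp
      also have "set (filter (\<lambda>j. g j < r) [0..<n]) = {j\<in>{..<n}. g j < r}" by auto
      finally show ?thesis .
    qed
    finally show ?thesis .
  qed
  ultimately show ?thesis using sorted_nth_iff[of ?xs k r] assms by simp
qed

lemma card_pred_meas:
  assumes "finite J" "\<And>j. j \<in> J \<Longrightarrow> Measurable.pred M (P j)"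
  shows "{\<omega> \<in> space M. card {j\<in>J. P j \<omega>} < k} \<in> sets M"
proof -
  have eq: "real (card {j\<in>J. P j \<omega>}) = (\<Sum>j\<in>J. if P j \<omega> then 1 else 0)" for \<omega>
  proof -
    have "real (card {j\<in>J. P j \<omega>}) = (\<Sum>j\<in>{j\<in>J. P j \<omega>}. 1)" by simp
    also have "\<dots> = (\<Sum>j\<in>J. if P j \<omega> then 1 else 0)" using assms(1) by (rule sum.inter_filter)
    finally show ?thesis .
  qed
  have "(\<lambda>\<omega>. \<Sum>j\<in>J. if P j \<omega> then 1 else (0::real)) \<in> borel_measurable M"
    using assms(2) by (intro borel_measurable_sum) measurable
  then have "{\<omega> \<in> space M. (\<Sum>j\<in>J. if P j \<omega> then 1 else (0::real)) < real k} \<in> sets M"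
    by measurable
  moreover have "{\<omega> \<in> space M. card {j\<in>J. P j \<omega>} < k} =
      {\<omega> \<in> space M. (\<Sum>j\<in>J. if P j \<omega> then 1 else (0::real)) < real k}"
    by (simp only: eq[symmetric] of_nat_less_iff)
  ultimately show ?thesis by simp
qed

theorem theorem1:
  fixes M :: "'a measure" and MX :: "'x measure"
    and f :: "'x \<Rightarrow> 'y::finite \<Rightarrow> real"
    and X :: "nat \<Rightarrow> 'a \<Rightarrow> 'x" and Y :: "nat \<Rightarrow> 'a \<Rightarrow> 'y"
    and S :: "nat \<Rightarrow> 'a \<Rightarrow> 'y set"
    and n :: nat and \<epsilon> :: real
  assumes "prob_space M"
    and "prob_classifier MX f"
    and "\<And>i. i \<le> n \<Longrightarrow> X i \<in> measurable M MX"
    and "\<And>i. i \<le> n \<Longrightarrow> Y i \<in> measurable M (count_space UNIV)"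
    and "\<And>j. j < n \<Longrightarrow> S j \<in> measurable M (count_space UNIV)"
    and "\<And>j \<omega>. j < n \<Longrightarrow> \<omega> \<in> space M \<Longrightarrow> Y j \<omega> \<in> S j \<omega>"
    and "exchangeable M MX (count_space UNIV) n X Y"
    and "0 < \<epsilon>" and "\<epsilon> \<le> 1"
  shows "measure M {\<omega> \<in> space M.
            Y n \<omega> \<in> pred_set (X n \<omega>) f (E_max f (\<lambda>j. X j \<omega>) (\<lambda>j. S j \<omega>) n) \<epsilon>} \<ge> 1 - \<epsilon>"
proof -
  interpret P: prob_space M by fact
  note Xm = assms(3) and Ym = assms(4) and Sm = assms(5)
  have fm: "(\<lambda>x. f x y) \<in> borel_measurable MX" for y
    using assms(2) unfolding prob_classifier_def by blast
  define k where "k = nat \<lceil>(1 + real n) * (1 - \<epsilon>)\<rceil>"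
  define R where "R i \<omega> = 1 - f (X i \<omega>) (Y i \<omega>)" for i \<omega>
  define s where "s j \<omega> = 1 - Min ((\<lambda>y. f (X j \<omega>) y) ` S j \<omega>)" for j \<omega>
  define Ev where "Ev = {\<omega> \<in> space M.
            Y n \<omega> \<in> pred_set (X n \<omega>) f (E_max f (\<lambda>j. X j \<omega>) (\<lambda>j. S j \<omega>) n) \<epsilon>}"
  have sizeE: "size (E_max f xs T n) = n" for xs T
    unfolding E_max_def by simp
  have cs: "critical_score (E_max f xs T n) \<epsilon> =
     (if n < k then \<infinity> else if k = 0 then -\<infinity>
      else ereal (sorted_list_of_multiset (E_max f xs T n) ! (k - 1)))" for xs T
    unfolding critical_score_def Let_def sizeE k_def by simp
  have kge: "real k \<ge> (1 + real n) * (1 - \<epsilon>)"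
    unfolding k_def by linarith
  consider (big) "n < k" | (zero) "k = 0" | (mid) "1 \<le> k" "k \<le> n" by linarith
  then show ?thesis
  proof cases
    case big
    then have "Ev = space M" unfolding Ev_def pred_set_def cs by (simp add: one_ereal_def)
    then show ?thesis using P.prob_space assms(8) unfolding Ev_def by simp
  next
    case zero
    then have "(1 + real n) * (1 - \<epsilon>) \<le> 0" using kge by simp
    then have "1 - \<epsilon> \<le> 0"
      by (smt (verit, ccfv_SIG) mult_pos_pos of_nat_0_le_iff)
    then show ?thesis using measure_nonneg[of M] by (smt (verit))
  next
    case mid
    have Rm[measurable]: "i \<le> n \<Longrightarrow> R i \<in> borel_measurable M" for i
    proof -
      assume i: "i \<le> n"
      have "(\<lambda>\<omega>. (\<lambda>y \<omega>. f (X i \<omega>) y) (Y i \<omega>) \<omega>) \<in> borel_measurable M"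
        by (rule measurable_compose_countable[OF _ Ym[OF i]])
           (rule measurable_compose[OF Xm[OF i] fm])
      then show ?thesis unfolding R_def by measurable
    qed
    have sm[measurable]: "j < n \<Longrightarrow> s j \<in> borel_measurable M" for j
    proof -
      assume j: "j < n"
      have "(\<lambda>\<omega>. (\<lambda>T \<omega>. Min ((\<lambda>y. f (X j \<omega>) y) ` T)) (S j \<omega>) \<omega>) \<in> borel_measurable M"
        by (rule measurable_compose_countable[OF _ Sm[OF j]])
           (rule borel_measurable_Min, simp, rule measurable_compose[OF Xm fm], use j in simp)
      then show ?thesis unfolding s_def by measurable
    qed
    have Ev_eq: "Ev = {\<omega> \<in> space M. card {j\<in>{..<n}. s j \<omega> < R n \<omega>} < k}"
    proof -
      have "Y n \<omega> \<in> pred_set (X n \<omega>) f (E_max f (\<lambda>j. X j \<omega>) (\<lambda>j. S j \<omega>) n) \<epsilon>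
          \<longleftrightarrow> card {j\<in>{..<n}. s j \<omega> < R n \<omega>} < k" for \<omega>
      proof -
        have "Y n \<omega> \<in> pred_set (X n \<omega>) f (E_max f (\<lambda>j. X j \<omega>) (\<lambda>j. S j \<omega>) n) \<epsilon>
           \<longleftrightarrow> R n \<omega> \<le> sorted_list_of_multiset (image_mset (\<lambda>j. s j \<omega>) (mset [0..<n])) ! (k - 1)"
        proof -
          have e: "E_max f (\<lambda>j. X j \<omega>) (\<lambda>j. S j \<omega>) n = image_mset (\<lambda>j. s j \<omega>) (mset [0..<n])"
            unfolding E_max_def s_def by (rule refl)
          show ?thesis using mid unfolding pred_set_def cs unfolding e R_def
            by (simp add: one_ereal_def) linarith
        qed
        also have "\<dots> \<longleftrightarrow> card {j\<in>{..<n}. s j \<omega> < R n \<omega>} < k"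
          by (rule crit_iff[OF mid])
        finally show ?thesis .
      qed
      then show ?thesis unfolding Ev_def by auto
    qed
    have Ev_sets: "Ev \<in> sets M"
      unfolding Ev_eq by (rule card_pred_meas) auto
    define A where "A i = {\<omega> \<in> space M. card {j\<in>{0..n}. R j \<omega> < R i \<omega>} < k}" for i
    have A_sets: "i \<le> n \<Longrightarrow> A i \<in> sets M" for i
      unfolding A_def by (rule card_pred_meas) auto
    have An_Ev: "A n \<subseteq> Ev"
    proof
      fix \<omega> assume w: "\<omega> \<in> A n"
      then have wM: "\<omega> \<in> space M" unfolding A_def by simp
      have "{j\<in>{..<n}. s j \<omega> < R n \<omega>} \<subseteq> {j\<in>{0..n}. R j \<omega> < R n \<omega>}"
      proof
        fix j assume j: "j \<in> {j\<in>{..<n}. s j \<omega> < R n \<omega>}"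
        have "Min ((\<lambda>y. f (X j \<omega>) y) ` S j \<omega>) \<le> f (X j \<omega>) (Y j \<omega>)"
          using assms(6)[of j \<omega>] j wM by (intro Min_le) auto
        then have "R j \<omega> \<le> s j \<omega>" unfolding R_def s_def by simp
        then show "j \<in> {j\<in>{0..n}. R j \<omega> < R n \<omega>}" using j by auto
      qed
      then have "card {j\<in>{..<n}. s j \<omega> < R n \<omega>} \<le> card {j\<in>{0..n}. R j \<omega> < R n \<omega>}"
        by (intro card_mono) auto
      then show "\<omega> \<in> Ev" using w wM unfolding Ev_eq A_def by simp
    qed
    define N where "N = PiM {0..n} (\<lambda>_. MX \<Otimes>\<^sub>M (count_space UNIV :: 'y measure))"
    define rr where "rr p = 1 - f (fst p) (snd p)" for p :: "'x \<times> 'y"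
    have rrm[measurable]: "rr \<in> borel_measurable (MX \<Otimes>\<^sub>M (count_space UNIV :: 'y measure))"
    proof -
      have "(\<lambda>p. (\<lambda>y p. f (fst p) y) (snd p) p) \<in> borel_measurable (MX \<Otimes>\<^sub>M (count_space UNIV :: 'y measure))"
        by (rule measurable_compose_countable) (measurable, rule measurable_compose[OF _ fm], measurable)
      then show ?thesis unfolding rr_def by measurable
    qed
    define G where "G = {z \<in> space N. card {j\<in>{0..n}. rr (z j) < rr (z n)} < k}"
    have G_sets: "G \<in> sets N"
      unfolding G_def by (rule card_pred_meas) (auto simp: N_def)
    define Phi where "Phi \<pi> = (\<lambda>\<omega>. \<lambda>i\<in>{0..n}. (X (\<pi> i) \<omega>, Y (\<pi> i) \<omega>))" for \<pi> :: "nat \<Rightarrow> nat"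
    have Phim: "\<pi> permutes {0..n} \<Longrightarrow> Phi \<pi> \<in> measurable M N" for \<pi>
    proof -
      assume p: "\<pi> permutes {0..n}"
      show ?thesis unfolding Phi_def N_def
      proof (rule measurable_restrict)
        fix i assume i0: "i \<in> {0..n}"
        have "\<pi> i \<in> {0..n}" using p i0 by (metis permutes_in_image)
        then have "\<pi> i \<le> n" by simp
        then show "(\<lambda>\<omega>. (X (\<pi> i) \<omega>, Y (\<pi> i) \<omega>)) \<in> measurable M (MX \<Otimes>\<^sub>M count_space UNIV)"
          using Xm Ym by measurable
      qed
    qed
    have pre: "\<pi> permutes {0..n} \<Longrightarrow> Phi \<pi> -` G \<inter> space M =
        {\<omega> \<in> space M. card {j\<in>{0..n}. R (\<pi> j) \<omega> < R (\<pi> n) \<omega>} < k}" for \<pi>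
    proof -
      assume p: "\<pi> permutes {0..n}"
      have "\<omega> \<in> space M \<Longrightarrow> Phi \<pi> \<omega> \<in> space N" for \<omega>
        using measurable_space[OF Phim[OF p]] by blast
      moreover have "{j\<in>{0..n}. rr (Phi \<pi> \<omega> j) < rr (Phi \<pi> \<omega> n)} = {j\<in>{0..n}. R (\<pi> j) \<omega> < R (\<pi> n) \<omega>}" for \<omega>
        unfolding Phi_def rr_def R_def by auto
      ultimately show ?thesis unfolding G_def by auto
    qed
    have Aeq: "i \<le> n \<Longrightarrow> measure M (A i) = measure M (A n)" for i
    proof -
      assume i: "i \<le> n"
      define \<pi> where "\<pi> = Transposition.transpose i n"
      have p: "\<pi> permutes {0..n}" unfolding \<pi>_def using i by (intro permutes_swap_id) auto
      have pid: "id permutes {0..n}" by (rule permutes_id)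
      have ex: "distr M N (Phi \<pi>) = distr M N (Phi id)"
        using assms(7) p unfolding exchangeable_def N_def Phi_def by simp
      have "measure M (Phi \<pi> -` G \<inter> space M) = measure M (Phi id -` G \<inter> space M)"
        using arg_cong[OF ex, of "\<lambda>D. measure D G"] measure_distr[OF Phim[OF p] G_sets]
          measure_distr[OF Phim[OF pid] G_sets] by simp
      moreover have "Phi id -` G \<inter> space M = A n" unfolding pre[OF pid] A_def by simp
      moreover have "Phi \<pi> -` G \<inter> space M = A i"
      proof -
        have "card {j\<in>{0..n}. R (\<pi> j) \<omega> < R (\<pi> n) \<omega>} = card {j\<in>{0..n}. R j \<omega> < R i \<omega>}" for \<omega>
        proof -
          have "\<pi> n = i" unfolding \<pi>_def by simp
          have "bij_betw \<pi> {j\<in>{0..n}. R (\<pi> j) \<omega> < R (\<pi> n) \<omega>} {j\<in>{0..n}. R j \<omega> < R i \<omega>}"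
            unfolding \<pi>_def using i by (auto simp: bij_betw_def inj_on_def image_def Transposition.transpose_def)
          then show ?thesis by (rule bij_betw_same_card)
        qed
        then show ?thesis unfolding pre[OF p] A_def by simp
      qed
      ultimately show ?thesis by simp
    qed
    have sumk: "real k \<le> (\<Sum>i\<in>{0..n}. measure M (A i))"
    proof -
      have int: "integrable M (indicator (A i) :: 'a \<Rightarrow> real)" if "i \<in> {0..n}" for i
        using A_sets that P.emeasure_finite by (intro integrable_real_indicator) (auto simp: less_top[symmetric])
      have "(\<Sum>i\<in>{0..n}. measure M (A i)) = (\<Sum>i\<in>{0..n}. integral\<^sup>L M (indicator (A i)))"
        using A_sets by (intro sum.cong) (auto simp: Int_absorb2 sets.sets_into_space)
      also have "\<dots> = integral\<^sup>L M (\<lambda>\<omega>. \<Sum>i\<in>{0..n}. indicator (A i) \<omega>)"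
        using int by (simp add: integral_sum)
      also have "\<dots> \<ge> integral\<^sup>L M (\<lambda>\<omega>. real k)"
      proof (rule integral_mono)
        show "integrable M (\<lambda>\<omega>. \<Sum>i\<in>{0..n}. indicator (A i) \<omega> :: real)"
          by ((rule Bochner_Integration.integrable_sum[where I="{0..n}" and f="\<lambda>i. indicator (A i)"], rule int, assumption) | (rule Bochner_Integration.integrable_sum, rule int, assumption) | (metis (no_types) Bochner_Integration.integrable_sum int))
        show "integrable M (\<lambda>\<omega>. real k)" by simp
        fix \<omega> assume w: "\<omega> \<in> space M"
        have "(\<Sum>i\<in>{0..n}. indicator (A i) \<omega> :: real) = real (card {i\<in>{0..n}. \<omega> \<in> A i})"
        proof -
          have "real (card {i\<in>{0..n}. \<omega> \<in> A i}) = (\<Sum>i\<in>{i\<in>{0..n}. \<omega> \<in> A i}. 1)" by simp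
          also have "\<dots> = (\<Sum>i\<in>{0..n}. if \<omega> \<in> A i then 1 else 0)" by (rule sum.inter_filter) simp
          also have "\<dots> = (\<Sum>i\<in>{0..n}. indicator (A i) \<omega>)" by (rule sum.cong) (auto simp: indicator_def)
          finally show ?thesis by (rule sym)
        qed
        also have "{i\<in>{0..n}. \<omega> \<in> A i} = {i\<in>{0..n}. card {j\<in>{0..n}. R j \<omega> < R i \<omega>} < k}"
          using w unfolding A_def by auto
        finally show "real k \<le> (\<Sum>i\<in>{0..n}. indicator (A i) \<omega>)"
          using comb_count[of "{0..n}" k "\<lambda>j. R j \<omega>"] mid by simp
      qed
      finally show ?thesis using P.prob_space by simp
    qed
    have "(\<Sum>i\<in>{0..n}. measure M (A i)) = (1 + real n) * measure M (A n)"
    proof -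
      have "(\<Sum>i\<in>{0..n}. measure M (A i)) = (\<Sum>i\<in>{0..n}. measure M (A n))"
        by (rule sum.cong) (auto intro: Aeq)
      then show ?thesis by simp
    qed
    then have "(1 + real n) * (1 - \<epsilon>) \<le> (1 + real n) * measure M (A n)"
      using sumk kge by linarith
    then have "1 - \<epsilon> \<le> measure M (A n)"
      by (smt (verit) mult_le_cancel_left_pos of_nat_0_le_iff)
    also have "\<dots> \<le> measure M Ev"
      using An_Ev Ev_sets by (intro P.finite_measure_mono)
    finally show ?thesis unfolding Ev_def .
  qed
qed

end
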